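(* Let $f$ be a Lipschitz function on $\mathcal{X}$ and run the ECP algorithm on $f$. Let $(x_i)_{1\le i\le t}$ be the points evaluated by ECP up to time $t$, and let $v_t$ be the number of times the growth condition has been validated (i.e. $\varepsilon_t$ has been multiplied by $\tau_{n,d}$ due to the growth condition) during iteration $t$. For a candidate $x\in\mathcal{X}$ drawn uniformly at random from $\mathcal{X}$ while seeking $x_{t+1}$, let $R(x,t+1,v_t)$ be the event that $x$ is rejected by the acceptance condition after these $v_t$ growths. Then $$\mathbb{P}\big(R(x,t+1,v_t)\big)\le\frac{t\,(\sqrt{\pi}\,\Delta)^d}{\varepsilon_1^d\,\tau_{n,d}^{(t-1)d}\,\tau_{n,d}^{v_t d}\,\Gamma(d/2+1)\,\lambda(\mathcal{X})}.$$
   Context: Setting: $\mathcal{X}\subset\mathbb{R}^d$ is convex, compact with non-empty interior; $f:\mathcal{X}\to\mathbb{R}$ is Lipschitz. $\Delta=\max_{x\in\mathcal{X}}f(x)-\min_{x\in\mathcal{X}}f(x)$, $\lambda$ is Lebesgue measure, $\Gamma(x)=\int_0^\infty s^{x-1}e^{-s}\,ds$. For evaluated points $x_1,\dots,x_t$ and $\varepsilon>0$, $\mathcal{A}_{\varepsilon,t}=\{x\in\mathcal{X}: \min_{i\le t}(f(x_i)+\varepsilon\|x-x_i\|_2)\ge\max_{j\le t}f(x_j)\}$. ECP algorithm. Inputs: budget $n\in\mathbb{N}^\star$, $\varepsilon_1>0$, a coefficient $\tau_{n,d}>1$ (a non-decreasing function of $n$ and $d$), a constant $C>1$. Draw $x_1\sim\mathcal{U}(\mathcal{X})$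 and evaluate $f(x_1)$; set $t=1$, $h_1=1$, $h_2=0$. While $t<n$: draw a fresh candidate $x_{t+1}\sim\mathcal{U}(\mathcal{X})$ and set $h_{t+1}\leftarrow h_{t+1}+1$; if $h_{t+1}-h_t>C$ (growth condition), set $\varepsilon_t\leftarrow\tau_{n,d}\varepsilon_t$ and $h_{t+1}\leftarrow0$; if $x_{t+1}\in\mathcal{A}_{\varepsilon_t,t}$ (acceptance condition), evaluate $f(x_{t+1})$, set $t\leftarrow t+1$, then $h_t\leftarrow h_{t+1}$ (the counter of the round just finished), $\varepsilon_{t+1}\leftarrow\tau_{n,d}\varepsilon_t$, $h_{t+1}\leftarrow0$. Output $x_{\hat i}$ with $\hat i\in\arg\max_{i\le n}f(x_i)$. "Iteration $t$" is the phase in which the algorithm seeks $x_{t+1}$, with current parameter $\varepsilon_t$. *)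

theory Defs
  imports "HOL-Analysis.Analysis" "HOL-Probability.Probability"
begin

definition ecp_accept :: "('a::euclidean_space \<Rightarrow> real) \<Rightarrow> 'a set \<Rightarrow> (nat \<Rightarrow> 'a) \<Rightarrow> nat \<Rightarrow> real \<Rightarrow> 'a set" where
  "ecp_accept f X xs t eps =
     {x \<in> X. Min ((\<lambda>i. f (xs i) + eps * norm (x - xs i)) ` {1..t}) \<ge> Max ((\<lambda>j. f (xs j)) ` {1..t})}"

definition ecp_reject :: "('a::euclidean_space \<Rightarrow> real) \<Rightarrow> 'a set \<Rightarrow> (nat \<Rightarrow> 'a) \<Rightarrow> nat \<Rightarrow> real \<Rightarrow> 'a set" where
  "ecp_reject f X xs t eps = X - ecp_accept f X xs t eps"

end

theory Submission
  imports Defs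
begin

theorem proposition4:
  fixes f :: "'a::euclidean_space \<Rightarrow> real"
    and X :: "'a set"
    and xs :: "nat \<Rightarrow> 'a"
    and t n g v :: nat
    and eps1 tau :: real
  assumes "convex X" and "compact X" and "interior X \<noteq> {}"
    and "\<exists>L. L-lipschitz_on X f"
    and "eps1 > 0" and "tau > 1"
    and "1 \<le> t" and "t < n"
    and "\<forall>i\<in>{1..t}. xs i \<in> X"
  shows "measure (uniform_measure lborel X)
           (ecp_reject f X xs t (eps1 * tau ^ (t - 1 + g + v)))
         \<le> real t * (sqrt pi * ((SUP x\<in>X. f x) - (INF x\<in>X. f x))) ^ DIM('a)
           / (eps1 ^ DIM('a) * tau ^ ((t - 1) * DIM('a)) * tau ^ (v * DIM('a))
              * Gamma (real DIM('a) / 2 + 1) * measure lborel X)"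
proof -
  define d where "d = DIM('a)"
  define D where "D = (SUP x\<in>X. f x) - (INF x\<in>X. f x)"
  define E where "E = eps1 * tau ^ (t - 1 + g + v)"
  define E' where "E' = eps1 * tau ^ (t - 1) * tau ^ v"
  define R where "R = ecp_reject f X xs t E"
  define U where "U = (\<Union>i\<in>{1..t}. ball (xs i) (D / E))"
  obtain L where L: "L-lipschitz_on X f" using assms(4) by blast
  have cont: "continuous_on X f" using lipschitz_on_continuous_on[OF L] .
  have cpt: "compact (f ` X)" using compact_continuous_image[OF cont assms(2)] .
  have bdd: "bdd_above (f ` X)" "bdd_below (f ` X)"
    using compact_imp_bounded[OF cpt] by (auto intro: bounded_imp_bdd_above bounded_imp_bdd_below)
  have fle: "f x \<le> (SUP x\<in>X. f x)" "(INF x\<in>X. f x) \<le> f x" if "x \<in> X" for x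
    using bdd that by (auto intro: cSUP_upper cINF_lower)
  have Epos: "E' > 0" using assms(5,6) unfolding E'_def by simp
  have EE': "E' \<le> E"
  proof -
    have "tau ^ (t - 1) * tau ^ v \<le> tau ^ (t - 1 + g + v)"
      using assms(6) by (simp add: power_add[symmetric] power_increasing)
    then show ?thesis unfolding E_def E'_def using assms(5)
      by (simp add: mult.assoc)
  qed
  have Dnn: "D \<ge> 0" using fle[of "xs 1"] assms(7,9) unfolding D_def by fastforce
  have RU: "R \<subseteq> U"
  proof
    fix x assume "x \<in> R"
    hence xX: "x \<in> X" and na: "x \<notin> ecp_accept f X xs t E" unfolding R_def ecp_reject_def by auto
    let ?A = "(\<lambda>i. f (xs i) + E * norm (x - xs i)) ` {1..t}"
    let ?B = "(\<lambda>j. f (xs j)) ` {1..t}"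
    have ne: "{1..t} \<noteq> {}" using assms(7) by simp
    have "Min ?A < Max ?B" using na xX unfolding ecp_accept_def by auto
    moreover have "Min ?A \<in> ?A" using ne by (intro Min_in) auto
    moreover have "Max ?B \<in> ?B" using ne by (intro Max_in) auto
    ultimately obtain i j where ij: "i \<in> {1..t}" "j \<in> {1..t}"
      "f (xs i) + E * norm (x - xs i) < f (xs j)" by auto
    have "f (xs j) - f (xs i) \<le> D" using fle[of "xs i"] fle[of "xs j"] ij assms(9)
      unfolding D_def by fastforce
    hence "E * norm (x - xs i) < D" using ij by linarith
    moreover have "E > 0" using Epos EE' by linarith
    ultimately have "norm (x - xs i) < D / E" by (simp add: field_simps)
    thus "x \<in> U" unfolding U_def using ij by (auto simp: dist_norm norm_minus_commute)
  qed
  have Xs: "X \<in> sets lborel" using assms(2) by (simp add: compact_imp_closed borel_closed)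
  obtain c e where ce: "e > 0" "ball c e \<subseteq> X"
    using assms(3) by (meson all_not_in_conv mem_interior)
  have "0 < emeasure lborel (ball c e)" using ce(1) by (simp add: emeasure_ball)
  also have "\<dots> \<le> emeasure lborel X" using ce(2) Xs by (intro emeasure_mono) auto
  finally have mX0: "emeasure lborel X \<noteq> 0" by simp
  have mXf: "emeasure lborel X \<noteq> \<infinity>"
    using emeasure_bounded_finite[OF compact_imp_bounded[OF assms(2)]] by simp
  have mXne: "measure lborel X \<noteq> 0"
  proof
    assume h: "measure lborel X = 0"
    have "emeasure lborel X = ennreal (measure lborel X)"
      using emeasure_eq_ennreal_measure[of lborel X] mXf by simp
    with h have "emeasure lborel X = 0" by simp
    with mX0 show False by simp
  qed
  have mXpos: "measure lborel X > 0"
    using mXne measure_nonneg[of lborel X] by linarith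
  have Us: "U \<in> sets lborel" unfolding U_def by auto
  have Ufin: "emeasure lborel U < \<infinity>"
    unfolding U_def by (intro emeasure_bounded_finite) auto
  have Epos2: "E > 0" using Epos EE' by linarith
  have mU: "measure lborel U \<le> real t * (unit_ball_vol d * (D / E) ^ d)"
  proof -
    have "measure lborel U \<le> (\<Sum>i\<in>{1..t}. measure lborel (ball (xs i) (D / E)))"
      unfolding U_def by (intro measure_UNION_le) auto
    also have "\<dots> = real t * (unit_ball_vol d * (D / E) ^ d)"
      using Dnn Epos2 by (simp add: content_ball d_def)
    finally show ?thesis .
  qed
  have key: "measure (uniform_measure lborel X) R \<le> real t * (unit_ball_vol d * (D / E) ^ d) / measure lborel X"
  proof (cases "R \<in> sets lborel")
    case False
    then have "measure (uniform_measure lborel X) R = 0" by (simp add: measure_notin_sets)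
    then show ?thesis using mXpos Dnn Epos2 by simp
  next
    case True
    have "measure (uniform_measure lborel X) R = measure lborel (X \<inter> R) / measure lborel X"
      using mX0 mXf True by simp
    also have "measure lborel (X \<inter> R) \<le> measure lborel U"
      using RU Us Ufin True Xs by (intro measure_mono_fmeasurable) (auto simp: fmeasurable_def)
    then have "measure lborel (X \<inter> R) / measure lborel X \<le> measure lborel U / measure lborel X"
      using mXpos by (simp add: divide_right_mono)
    also have "\<dots> \<le> real t * (unit_ball_vol d * (D / E) ^ d) / measure lborel X"
      using mXpos mU by (simp add: divide_right_mono)
    finally show ?thesis .
  qed
  have "(D / E) ^ d \<le> (D / E') ^ d"
    using Dnn Epos EE' by (intro power_mono divide_left_mono) auto
  then have "real t * (unit_ball_vol d * (D / E) ^ d) / measure lborel X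
      \<le> real t * (unit_ball_vol d * (D / E') ^ d) / measure lborel X"
    using mXpos by (intro divide_right_mono mult_left_mono) auto
  also have "\<dots> = real t * (sqrt pi * D) ^ d
           / (eps1 ^ d * tau ^ ((t - 1) * d) * tau ^ (v * d) * Gamma (real d / 2 + 1) * measure lborel X)"
  proof -
    have sp: "sqrt pi ^ d = pi powr (real d / 2)"
      by (simp add: sqrt_def powr_realpow[symmetric] root_powr_inverse powr_powr)
    show ?thesis unfolding unit_ball_vol_def E'_def
      by (simp add: power_mult_distrib power_divide sp power_mult[symmetric] mult.commute)
  qed
  finally show ?thesis using key unfolding R_def E_def D_def d_def by simp
qed

end
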